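(* Let $f$ be a Moufang permutation on an abelian group $(X,+)$ with associated biadditive mapping $\beta$. Then $(f^3,\beta)$ is a construction pair on $(X,+)$.
   Context: A permutation $f$ of an abelian group $(X,+)$ is a Moufang permutation if the map $\beta(x,y)=f^{-1}(f(x)+f(y))-x-y$ (P1) is symmetric, alternating ($\beta(x,x)=0$) and biadditive, and for all $x,y,z\in X$: (P2) $\beta(\beta(x,y),z)=0$ and (P3) $\beta(f(x),f(y))=f(\beta(f^3(x),y))$; $\beta$ is the associated biadditive mapping. A construction pair on $(X,+)$ is a pair $(g,\gamma)$ where $g$ is a permutation of $X$ and $\gamma:X\times X\to X$ is symmetric, alternating and biadditive, such that for all $x,y,z\in X$: (C1) $g^{-1}(g(x)+g(y))=x+y+\gamma(x,y)+g^{-1}(\gamma(x,y))+g^{-2}(\gamma(x,y))$; (C2) $\gamma(\gamma(x,y),z)=0$; (C3) $g^{-1}(\gamma(x,y))=\gamma(g(x),y)$. *)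

theory Defs
  imports Main
begin

definition symmetric_map :: "('a \<Rightarrow> 'a \<Rightarrow> 'a) \<Rightarrow> bool" where
  "symmetric_map b \<longleftrightarrow> (\<forall>x y. b x y = b y x)"

definition alternating_map :: "('a::ab_group_add \<Rightarrow> 'a \<Rightarrow> 'a) \<Rightarrow> bool" where
  "alternating_map b \<longleftrightarrow> (\<forall>x. b x x = 0)"

definition biadditive :: "('a::ab_group_add \<Rightarrow> 'a \<Rightarrow> 'a) \<Rightarrow> bool" where
  "biadditive b \<longleftrightarrow> (\<forall>x y z. b (x + y) z = b x z + b y z) \<and> (\<forall>x y z. b x (y + z) = b x y + b x z)"

definition assoc_beta :: "('a::ab_group_add \<Rightarrow> 'a) \<Rightarrow> 'a \<Rightarrow> 'a \<Rightarrow> 'a" where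
  "assoc_beta f x y = inv f (f x + f y) - x - y"

definition moufang_permutation :: "('a::ab_group_add \<Rightarrow> 'a) \<Rightarrow> bool" where
  "moufang_permutation f \<longleftrightarrow> bij f \<and>
     (let \<beta> = assoc_beta f in
        symmetric_map \<beta> \<and> alternating_map \<beta> \<and> biadditive \<beta> \<and>
        (\<forall>x y z. \<beta> (\<beta> x y) z = 0) \<and>
        (\<forall>x y. \<beta> (f x) (f y) = f (\<beta> ((f ^^ 3) x) y)))"

definition construction_pair :: "('a::ab_group_add \<Rightarrow> 'a) \<Rightarrow> ('a \<Rightarrow> 'a \<Rightarrow> 'a) \<Rightarrow> bool" where
  "construction_pair g \<gamma> \<longleftrightarrow> bij g \<and>
     symmetric_map \<gamma> \<and> alternating_map \<gamma> \<and> biadditive \<gamma> \<and>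
     (\<forall>x y. inv g (g x + g y) = x + y + \<gamma> x y + inv g (\<gamma> x y) + inv g (inv g (\<gamma> x y))) \<and>
     (\<forall>x y z. \<gamma> (\<gamma> x y) z = 0) \<and>
     (\<forall>x y. inv g (\<gamma> x y) = \<gamma> (g x) y)"

end

theory Submission
  imports Defs
begin

lemma funpow3: "(f ^^ 3) x = f (f (f x))"
  by (simp add: numeral_3_eq_3)

theorem mainTheorem14:
  fixes f :: "'a::ab_group_add \<Rightarrow> 'a"
  assumes "moufang_permutation f"
  shows "construction_pair (f ^^ 3) (assoc_beta f)"
proof -
  define B where "B = assoc_beta f"
  define F where "F = inv f"
  have bij: "bij f" using assms by (simp add: moufang_permutation_def)
  have fF: "f (F y) = y" for y using bij unfolding F_def by (simp add: bij_is_surj surj_f_inv_f)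
  have Ff: "F (f y) = y" for y using bij unfolding F_def by (simp add: bij_is_inj inv_f_f)
  have sym: "\<And>x y. B x y = B y x" and alt: "\<And>x. B x x = 0"
    and add1: "\<And>x y z. B (x + y) z = B x z + B y z"
    and add2: "\<And>x y z. B x (y + z) = B x y + B x z"
    and nil: "\<And>x y z. B (B x y) z = 0"
    and P3: "\<And>x y. B (f x) (f y) = f (B ((f ^^ 3) x) y)"
    using assms unfolding moufang_permutation_def Let_def B_def symmetric_map_def
      alternating_map_def biadditive_def by auto
  have P3': "B (f x) (f y) = f (B (f (f (f x))) y)" for x y using P3 by (simp add: funpow3)
  have defn: "F (f a + f b) = a + b + B a b" for a b
    unfolding B_def assoc_beta_def F_def by simp
  have Fadd: "F (p + q) = F p + F q + B (F p) (F q)" for p q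
    using defn[of "F p" "F q"] by (simp add: fF)
  have nil2: "B z (B x y) = 0" for x y z using nil sym by metis
  have FB: "F (B x y) = B (f (f x)) (F y)" for x y
    using P3'[of "F x" "F y"] by (metis Ff fF)
  define R where "R r = (\<exists>u v. r = B u v)" for r
  have RB: "R (B u v)" for u v unfolding R_def by blast
  have RF: "R r \<Longrightarrow> R (F r)" for r unfolding R_def using FB by metis
  have Fsr: "R r \<Longrightarrow> F (s + r) = F s + F r" for s r
  proof -
    assume "R r"
    then have "R (F r)" by (rule RF)
    then obtain u v where "F r = B u v" unfolding R_def by blast
    then show ?thesis using Fadd[of s r] nil2 by simp
  qed
  have symg: "B (f (f (f x))) y = B x (f (f (f y)))" for x y
    using P3'[of x y] P3'[of y x] sym by (metis Ff)
  have C3: "F (F (F (B x y))) = B (f (f (f x))) y" for x y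
  proof -
    have "F (F (F (B x y))) = B (f (f (f (f (f (f x)))))) (F (F (F y)))"
      by (simp add: FB)
    also have "\<dots> = B (f (f (f x))) y" using symg[of "f (f (f x))" "F (F (F y))"] by (simp add: fF)
    finally show ?thesis .
  qed
  have Bff: "B (f a) (f b) = F (F (B a b))" for a b
    using P3'[of a b] C3[of a b, symmetric] by (simp add: fF)
  have C1: "F (F (F (f (f (f x)) + f (f (f y))))) =
      x + y + B x y + F (F (F (B x y))) + F (F (F (F (F (F (B x y))))))" for x y
  proof -
    let ?c = "B x y"
    have Rc: "R ((F ^^ n) ?c)" for n by (induction n) (auto simp: RB RF)
    have R1: "R (F (F ?c))" using Rc[of 2] by (simp add: numeral_2_eq_2)
    have R2: "R (F (F (F ?c)))" using Rc[of 3] by (simp add: numeral_3_eq_3)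
    have R4: "R (F (F (F (F ?c))))" using Rc[of 4] by (simp add: eval_nat_numeral)
    have R5: "R (F (F (F (F (F ?c)))))" using Rc[of 5] by (simp add: eval_nat_numeral)
    have "F (f (f (f x)) + f (f (f y))) = f (f x) + f (f y) + F (F (F (F ?c)))"
      using defn[of "f (f x)" "f (f y)"] Bff[of "f x" "f y"] Bff[of x y] by simp
    moreover have "F (f (f x) + f (f y) + F (F (F (F ?c)))) = f x + f y + F (F ?c) + F (F (F (F (F ?c))))"
      using Fsr[OF R4, of "f (f x) + f (f y)"] defn[of "f x" "f y"] Bff[of x y] by simp
    moreover have "F (f x + f y + F (F ?c) + F (F (F (F (F ?c))))) = x + y + ?c + F (F (F ?c)) + F (F (F (F (F (F ?c)))))"
      using Fsr[OF R5, of "f x + f y + F (F ?c)"] Fsr[OF R1, of "f x + f y"] defn[of x y] by simp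
    ultimately show ?thesis by simp
  qed
  have invg: "inv (f ^^ 3) y = F (F (F y))" for y
  proof -
    have "(f ^^ 3) (F (F (F y))) = y" by (simp add: funpow3 fF)
    moreover have "inj (f ^^ 3)" using bij by (simp add: bij_is_inj inj_fn)
    ultimately show ?thesis by (metis inv_f_f)
  qed
  have "bij (f ^^ 3)" using bij by (simp add: bij_fn)
  then show ?thesis
    unfolding construction_pair_def B_def[symmetric] invg funpow3
    using sym alt add1 add2 nil C1 C3
    by (simp add: symmetric_map_def alternating_map_def biadditive_def add.assoc)
qed

end
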